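(* (a) For every $A\in\mathcal{A}$, $\widehat{\chi_A}=|\chi_A\rangle\langle\chi_A|=\mu(A)$. (b) For every random variable $f$ and every $\alpha\in\mathbb{R}$, $\widehat{\alpha f}=\alpha\widehat f$. (c) If $0\le f_1\le f_2\le\cdots$ is an increasing sequence of random variables converging pointwise to a random variable $f$, then $\widehat{f_i}\to\widehat f$ in the operator norm topology. (d) If $f,g,h$ are random variables with mutually disjoint supports, then $$\widehat{f+g+h}=\widehat{f+g}+\widehat{f+h}+\widehat{g+h}-\widehat f-\widehat g-\widehat h.$$
   Context: $(\Omega,\mathcal{A},\nu)$ is a probability space and $H=L_2(\Omega,\mathcal{A},\nu)$ is the complex Hilbert space with inner product $\langle f,g\rangle=\int\bar f g\,d\nu$. A random variable is a real-valued $f\in H$. For $A\in\mathcal{A}$, $\chi_A$ is its characteristic function and $\mu(A)=|\chi_A\rangle\langle\chi_A|$ is the operator $g\mapsto\left(\int_A g\,d\nu\right)\chi_A$. For a random variable $f\ge 0$, its quantization $\widehat f$ is the operator on $H$ given by $(\widehat f g)(y)=\int\min[f(x),f(y)]\,g(x)\,d\nu(x)$. For an arbitrary random variable $f$, write $f=f^+-f^-$ with $f^+=\max(f,0)$, $f^-=-\min(f,0)$, and define $\widehat f=\widehat{f^+}-\widehat{f^-}$. (Here $\widehat{\alpha f}$ etc. denotes the quantization of the random variable $\alpha f$.) *)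

theory Defs
  imports "HOL-Probability.Probability"
begin

text \<open>Elements of H = L2(Omega, A, nu) (complex), represented by functions.\<close>
definition L2 :: "'a measure \<Rightarrow> ('a \<Rightarrow> complex) set" where
  "L2 M = {g. g \<in> borel_measurable M \<and> integrable M (\<lambda>x. (cmod (g x))\<^sup>2)}"

definition l2norm :: "'a measure \<Rightarrow> ('a \<Rightarrow> complex) \<Rightarrow> real" where
  "l2norm M g = sqrt (LINT x|M. (cmod (g x))\<^sup>2)"

definition rand_var :: "'a measure \<Rightarrow> ('a \<Rightarrow> real) \<Rightarrow> bool" where
  "rand_var M f \<longleftrightarrow> f \<in> borel_measurable M \<and> integrable M (\<lambda>x. (f x)\<^sup>2)"

text \<open>Operators on H are represented as maps of functions; two operators are equal
  if they agree (almost everywhere) on every element of H.\<close>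
definition op_eq :: "'a measure \<Rightarrow> (('a \<Rightarrow> complex) \<Rightarrow> 'a \<Rightarrow> complex)
    \<Rightarrow> (('a \<Rightarrow> complex) \<Rightarrow> 'a \<Rightarrow> complex) \<Rightarrow> bool" where
  "op_eq M T S \<longleftrightarrow> (\<forall>g\<in>L2 M. AE y in M. T g y = S g y)"

text \<open>Operator norm (valued in ennreal, so that it is always defined).\<close>
definition op_norm :: "'a measure \<Rightarrow> (('a \<Rightarrow> complex) \<Rightarrow> 'a \<Rightarrow> complex) \<Rightarrow> ennreal" where
  "op_norm M T = (SUP g\<in>{g\<in>L2 M. l2norm M g \<le> 1}. ennreal (l2norm M (T g)))"

definition quant_pos :: "'a measure \<Rightarrow> ('a \<Rightarrow> real) \<Rightarrow> ('a \<Rightarrow> complex) \<Rightarrow> 'a \<Rightarrow> complex" where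
  "quant_pos M f g y = (LINT x|M. complex_of_real (min (f x) (f y)) * g x)"

definition quant :: "'a measure \<Rightarrow> ('a \<Rightarrow> real) \<Rightarrow> ('a \<Rightarrow> complex) \<Rightarrow> 'a \<Rightarrow> complex" where
  "quant M f g y = quant_pos M (\<lambda>x. max (f x) 0) g y - quant_pos M (\<lambda>x. - min (f x) 0) g y"

definition mu_op :: "'a measure \<Rightarrow> 'a set \<Rightarrow> ('a \<Rightarrow> complex) \<Rightarrow> 'a \<Rightarrow> complex" where
  "mu_op M A g y = (LINT x|M. indicator A x * g x) * indicator A y"

end

theory Submission
  imports Defs
begin


lemma quant_pos_zero: "quant_pos M (\<lambda>x. 0) g y = 0"
  by (simp add: quant_pos_def)

lemma quant_pos_scale:
  assumes "0 \<le> c"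
  shows "quant_pos M (\<lambda>x. c * k x) g y = complex_of_real c * quant_pos M k g y"
proof -
  have "(\<lambda>x. complex_of_real (min (c * k x) (c * k y)) * g x)
        = (\<lambda>x. complex_of_real c * (complex_of_real (min (k x) (k y)) * g x))"
  proof
    fix x
    have "min (c * k x) (c * k y) = c * min (k x) (k y)"
      using assms by (simp add: min_mult_distrib_left)
    then show "complex_of_real (min (c * k x) (c * k y)) * g x
        = complex_of_real c * (complex_of_real (min (k x) (k y)) * g x)" by simp
  qed
  then show ?thesis unfolding quant_pos_def by (simp only:) simp
qed

lemma part_a: "op_eq M (quant M (indicator A)) (mu_op M A)"
proof -
  have "quant M (indicator A) g y = mu_op M A g y" for g y
  proof -
    have e1: "(\<lambda>x. max (indicator A x :: real) 0) = indicator A"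
      by (auto simp: indicator_def)
    have e2: "(\<lambda>x. - min (indicator A x :: real) 0) = (\<lambda>x. 0)"
      by (auto simp: indicator_def)
    show ?thesis
    proof (cases "y \<in> A")
      case True
      have "(\<lambda>x. complex_of_real (min (indicator A x) (indicator A y)) * g x) = (\<lambda>x. indicator A x * g x)"
        using True by (auto simp: indicator_def)
      then show ?thesis using True
        by (simp add: quant_def e1 e2 quant_pos_zero quant_pos_def mu_op_def)
    next
      case False
      then show ?thesis
        by (simp add: quant_def e1 e2 quant_pos_zero quant_pos_def mu_op_def)
    qed
  qed
  then show ?thesis by (simp add: op_eq_def)
qed

lemma part_b: "op_eq M (quant M (\<lambda>x. \<alpha> * f x)) (\<lambda>g y. complex_of_real \<alpha> * quant M f g y)"
proof -
  have "quant M (\<lambda>x. \<alpha> * f x) g y = complex_of_real \<alpha> * quant M f g y" for g y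
  proof (cases "0 \<le> \<alpha>")
    case True
    have e1: "(\<lambda>x. max (\<alpha> * f x) 0) = (\<lambda>x. \<alpha> * max (f x) 0)"
      using True by (auto simp: max_def mult_le_0_iff)
    have e2: "(\<lambda>x. - min (\<alpha> * f x) 0) = (\<lambda>x. \<alpha> * (- min (f x) 0))"
      using True by (auto simp: min_def mult_le_0_iff)
    show ?thesis using True
      unfolding quant_def e1 e2 by (simp only: quant_pos_scale[OF True]) (simp add: right_diff_distrib)
  next
    case False
    have e1: "(\<lambda>x. max (\<alpha> * f x) 0) = (\<lambda>x. (-\<alpha>) * (- min (f x) 0))"
      using False by (auto simp: max_def min_def mult_le_0_iff)
    have e2: "(\<lambda>x. - min (\<alpha> * f x) 0) = (\<lambda>x. (-\<alpha>) * max (f x) 0)"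
      using False by (auto simp: min_def max_def mult_le_0_iff)
    show ?thesis using False
      unfolding quant_def e1 e2 using False by (simp only: quant_pos_scale[of "-\<alpha>"]) (simp add: algebra_simps)
  qed
  then show ?thesis by (simp add: op_eq_def)
qed



lemma sq_int_bound:
  fixes k f :: "'a \<Rightarrow> real"
  assumes "k \<in> borel_measurable M" "integrable M (\<lambda>x. (f x)\<^sup>2)" "\<And>x. \<bar>k x\<bar> \<le> \<bar>f x\<bar>"
  shows "integrable M (\<lambda>x. (k x)\<^sup>2)"
proof (rule Bochner_Integration.integrable_bound[OF assms(2)])
  show "(\<lambda>x. (k x)\<^sup>2) \<in> borel_measurable M" using assms(1) by measurable
  show "AE x in M. norm ((k x)\<^sup>2) \<le> norm ((f x)\<^sup>2)"
    using assms(3) by (auto intro!: power_mono simp: abs_le_square_iff)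
qed

lemma kint:
  fixes k :: "'a \<Rightarrow> real"
  assumes "k \<in> borel_measurable M" "integrable M (\<lambda>x. (k x)\<^sup>2)" "\<And>x. 0 \<le> k x"
    "u \<in> L2 M" "0 \<le> c"
  shows "integrable M (\<lambda>x. complex_of_real (min (k x) c) * u x)"
proof -
  have um: "u \<in> borel_measurable M" and ui: "integrable M (\<lambda>x. (cmod (u x))\<^sup>2)"
    using assms(4) by (auto simp: L2_def)
  have w: "integrable M (\<lambda>x. (k x)\<^sup>2 + (cmod (u x))\<^sup>2)"
    using assms(2) ui by simp
  show ?thesis
  proof (rule Bochner_Integration.integrable_bound[OF w])
    show "(\<lambda>x. complex_of_real (min (k x) c) * u x) \<in> borel_measurable M"
      using assms(1) um by measurable
    show "AE x in M. norm (complex_of_real (min (k x) c) * u x) \<le> norm ((k x)\<^sup>2 + (cmod (u x))\<^sup>2)"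
    proof (intro AE_I2)
      fix x
      have a: "\<bar>min (k x) c\<bar> \<le> k x" using assms(3)[of x] assms(5) by auto
      have "norm (complex_of_real (min (k x) c) * u x) = \<bar>min (k x) c\<bar> * cmod (u x)"
        by (simp add: norm_mult)
      also have "\<dots> \<le> k x * cmod (u x)" using a by (simp add: mult_right_mono)
      also have "\<dots> \<le> (k x)\<^sup>2 + (cmod (u x))\<^sup>2"
        using sum_squares_bound[of "k x" "cmod (u x)"] mult_nonneg_nonneg[OF assms(3)[of x] norm_ge_zero[of "u x"]]
        by linarith
      also have "\<dots> = norm ((k x)\<^sup>2 + (cmod (u x))\<^sup>2)" by simp
      finally show "norm (complex_of_real (min (k x) c) * u x) \<le> norm ((k x)\<^sup>2 + (cmod (u x))\<^sup>2)" .
    qed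
  qed
qed

lemma kern_id:
  fixes a1 b1 c1 a2 b2 c2 :: real
  assumes "0 \<le> a1" "0 \<le> b1" "0 \<le> c1" "0 \<le> a2" "0 \<le> b2" "0 \<le> c2"
    "(b1 = 0 \<and> c1 = 0) \<or> (a1 = 0 \<and> c1 = 0) \<or> (a1 = 0 \<and> b1 = 0)"
    "(b2 = 0 \<and> c2 = 0) \<or> (a2 = 0 \<and> c2 = 0) \<or> (a2 = 0 \<and> b2 = 0)"
  shows "min (a1 + b1 + c1) (a2 + b2 + c2) = min (a1 + b1) (a2 + b2) + min (a1 + c1) (a2 + c2)
     + min (b1 + c1) (b2 + c2) - min a1 a2 - min b1 b2 - min c1 c2"
  using assms(7,8)
  apply (elim disjE conjE)
  using assms(1-6) by (simp_all add: min_absorb1 min_absorb2)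

lemma d_pos:
  fixes p q r :: "'a \<Rightarrow> real"
  assumes pm: "p \<in> borel_measurable M" and qm: "q \<in> borel_measurable M" and rm: "r \<in> borel_measurable M"
    and pi: "integrable M (\<lambda>x. (p x)\<^sup>2)" and qi: "integrable M (\<lambda>x. (q x)\<^sup>2)"
    and ri: "integrable M (\<lambda>x. (r x)\<^sup>2)"
    and pn: "\<And>x. 0 \<le> p x" and qn: "\<And>x. 0 \<le> q x" and rn: "\<And>x. 0 \<le> r x"
    and dis: "\<And>x. (q x = 0 \<and> r x = 0) \<or> (p x = 0 \<and> r x = 0) \<or> (p x = 0 \<and> q x = 0)"
    and u: "u \<in> L2 M"
  shows "quant_pos M (\<lambda>x. p x + q x + r x) u y =
     quant_pos M (\<lambda>x. p x + q x) u y + quant_pos M (\<lambda>x. p x + r x) u y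
     + quant_pos M (\<lambda>x. q x + r x) u y - quant_pos M p u y - quant_pos M q u y - quant_pos M r u y"
proof -
  have z1: "p x * q x = 0" "p x * r x = 0" "q x * r x = 0" for x
    using dis[of x] by auto
  have e1: "(\<lambda>x. (p x + q x)\<^sup>2) = (\<lambda>x. (p x)\<^sup>2 + (q x)\<^sup>2)"
    "(\<lambda>x. (p x + r x)\<^sup>2) = (\<lambda>x. (p x)\<^sup>2 + (r x)\<^sup>2)"
    "(\<lambda>x. (q x + r x)\<^sup>2) = (\<lambda>x. (q x)\<^sup>2 + (r x)\<^sup>2)"
    by (auto simp: power2_sum z1 mult.assoc)
  have ipq: "integrable M (\<lambda>x. (p x + q x)\<^sup>2)" "integrable M (\<lambda>x. (p x + r x)\<^sup>2)"
    "integrable M (\<lambda>x. (q x + r x)\<^sup>2)"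
    unfolding e1 using pi qi ri by auto
  let ?K = "\<lambda>k x. complex_of_real (min (k x) (k y)) * u x"
  have I: "integrable M (?K (\<lambda>x. p x + q x))" "integrable M (?K (\<lambda>x. p x + r x))"
     "integrable M (?K (\<lambda>x. q x + r x))" "integrable M (?K p)" "integrable M (?K q)"
     "integrable M (?K r)"
  proof -
    have m: "(\<lambda>x. p x + q x) \<in> borel_measurable M" "(\<lambda>x. p x + r x) \<in> borel_measurable M"
      "(\<lambda>x. q x + r x) \<in> borel_measurable M" using pm qm rm by auto
    have n: "\<And>x. 0 \<le> p x + q x" "\<And>x. 0 \<le> p x + r x" "\<And>x. 0 \<le> q x + r x"
      using pn qn rn by (simp_all add: add_nonneg_nonneg)
    show "integrable M (?K (\<lambda>x. p x + q x))" by (rule kint[OF m(1) ipq(1) n(1) u n(1)])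
    show "integrable M (?K (\<lambda>x. p x + r x))" by (rule kint[OF m(2) ipq(2) n(2) u n(2)])
    show "integrable M (?K (\<lambda>x. q x + r x))" by (rule kint[OF m(3) ipq(3) n(3) u n(3)])
    show "integrable M (?K p)" by (rule kint[OF pm pi pn u pn])
    show "integrable M (?K q)" by (rule kint[OF qm qi qn u qn])
    show "integrable M (?K r)" by (rule kint[OF rm ri rn u rn])
  qed
  have pt: "?K (\<lambda>x. p x + q x + r x) x = ?K (\<lambda>x. p x + q x) x + ?K (\<lambda>x. p x + r x) x
     + ?K (\<lambda>x. q x + r x) x - ?K p x - ?K q x - ?K r x" for x
  proof -
    have "min (p x + q x + r x) (p y + q y + r y) = min (p x + q x) (p y + q y) + min (p x + r x) (p y + r y)
     + min (q x + r x) (q y + r y) - min (p x) (p y) - min (q x) (q y) - min (r x) (r y)"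
      by (intro kern_id pn qn rn dis)
    then have "complex_of_real (min (p x + q x + r x) (p y + q y + r y)) = complex_of_real (min (p x + q x) (p y + q y) + min (p x + r x) (p y + r y)
     + min (q x + r x) (q y + r y) - min (p x) (p y) - min (q x) (q y) - min (r x) (r y))" by (simp only:)
    then have "complex_of_real (min (p x + q x + r x) (p y + q y + r y)) =
       complex_of_real (min (p x + q x) (p y + q y)) + complex_of_real (min (p x + r x) (p y + r y))
     + complex_of_real (min (q x + r x) (q y + r y)) - complex_of_real (min (p x) (p y))
     - complex_of_real (min (q x) (q y)) - complex_of_real (min (r x) (r y))"
      by (simp only: of_real_add of_real_diff)
    then show ?thesis by (simp only: distrib_right left_diff_distrib)
  qed
  have "(\<lambda>x. ?K (\<lambda>x. p x + q x + r x) x) = (\<lambda>x. ?K (\<lambda>x. p x + q x) x + ?K (\<lambda>x. p x + r x) x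
     + ?K (\<lambda>x. q x + r x) x - ?K p x - ?K q x - ?K r x)"
    by (rule ext) (rule pt)
  then show ?thesis
    unfolding quant_pos_def
    by (simp only:) (simp add: I)
qed


lemma part_d:
  assumes f: "rand_var M f" and g: "rand_var M g" and h: "rand_var M h"
    and d1: "\<forall>x. f x \<noteq> 0 \<longrightarrow> g x = 0 \<and> h x = 0" and d2: "\<forall>x. g x \<noteq> 0 \<longrightarrow> h x = 0"
  shows "op_eq M (quant M (\<lambda>x. f x + g x + h x))
               (\<lambda>u y. quant M (\<lambda>x. f x + g x) u y + quant M (\<lambda>x. f x + h x) u y
                    + quant M (\<lambda>x. g x + h x) u y
                    - quant M f u y - quant M g u y - quant M h u y)"
proof -
  have D: "(g x = 0 \<and> h x = 0) \<or> (f x = 0 \<and> h x = 0) \<or> (f x = 0 \<and> g x = 0)" for x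
    using d1 d2 by blast
  define fp where "fp = (\<lambda>x. max (f x) (0::real))"
  define gp where "gp = (\<lambda>x. max (g x) (0::real))"
  define hp where "hp = (\<lambda>x. max (h x) (0::real))"
  define fn where "fn = (\<lambda>x. - min (f x) (0::real))"
  define gn where "gn = (\<lambda>x. - min (g x) (0::real))"
  define hn where "hn = (\<lambda>x. - min (h x) (0::real))"
  have part: "k \<in> borel_measurable M \<and> integrable M (\<lambda>x. (k x)\<^sup>2)"
    if "rand_var M v" "k = (\<lambda>x. max (v x) 0) \<or> k = (\<lambda>x. - min (v x) 0)" for k v
  proof -
    have vm: "v \<in> borel_measurable M" and vi: "integrable M (\<lambda>x. (v x)\<^sup>2)"
      using that(1) by (auto simp: rand_var_def)
    have km: "k \<in> borel_measurable M" using that(2) vm by auto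
    have "\<bar>k x\<bar> \<le> \<bar>v x\<bar>" for x using that(2) by auto
    then show ?thesis using km sq_int_bound[OF km vi] by auto
  qed
  have pm: "fp \<in> borel_measurable M" "integrable M (\<lambda>x. (fp x)\<^sup>2)"
      "gp \<in> borel_measurable M" "integrable M (\<lambda>x. (gp x)\<^sup>2)"
      "hp \<in> borel_measurable M" "integrable M (\<lambda>x. (hp x)\<^sup>2)"
      "fn \<in> borel_measurable M" "integrable M (\<lambda>x. (fn x)\<^sup>2)"
      "gn \<in> borel_measurable M" "integrable M (\<lambda>x. (gn x)\<^sup>2)"
      "hn \<in> borel_measurable M" "integrable M (\<lambda>x. (hn x)\<^sup>2)"
    using part[OF f, of fp] part[OF g, of gp] part[OF h, of hp]
      part[OF f, of fn] part[OF g, of gn] part[OF h, of hn]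
    unfolding fp_def gp_def hp_def fn_def gn_def hn_def by auto
  have nn: "\<And>x. 0 \<le> fp x" "\<And>x. 0 \<le> gp x" "\<And>x. 0 \<le> hp x"
     "\<And>x. 0 \<le> fn x" "\<And>x. 0 \<le> gn x" "\<And>x. 0 \<le> hn x"
    unfolding fp_def gp_def hp_def fn_def gn_def hn_def by auto
  have Dp: "(gp x = 0 \<and> hp x = 0) \<or> (fp x = 0 \<and> hp x = 0) \<or> (fp x = 0 \<and> gp x = 0)" for x
    using D[of x] unfolding fp_def gp_def hp_def by auto
  have Dn: "(gn x = 0 \<and> hn x = 0) \<or> (fn x = 0 \<and> hn x = 0) \<or> (fn x = 0 \<and> gn x = 0)" for x
    using D[of x] unfolding fn_def gn_def hn_def by auto
  have P: "max (f x + g x + h x) 0 = fp x + gp x + hp x"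
     "- min (f x + g x + h x) 0 = fn x + gn x + hn x"
     "max (f x + g x) 0 = fp x + gp x"
     "- min (f x + g x) 0 = fn x + gn x"
     "max (f x + h x) 0 = fp x + hp x"
     "- min (f x + h x) 0 = fn x + hn x"
     "max (g x + h x) 0 = gp x + hp x"
     "- min (g x + h x) 0 = gn x + hn x" for x
    unfolding fp_def gp_def hp_def fn_def gn_def hn_def using D[of x] by (auto simp: max_def min_def)
  have E3: "(\<lambda>x. max (f x + g x + h x) 0) = (\<lambda>x. fp x + gp x + hp x)"
     "(\<lambda>x. - min (f x + g x + h x) 0) = (\<lambda>x. fn x + gn x + hn x)"
     "(\<lambda>x. max (f x + g x) 0) = (\<lambda>x. fp x + gp x)"
     "(\<lambda>x. - min (f x + g x) 0) = (\<lambda>x. fn x + gn x)"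
     "(\<lambda>x. max (f x + h x) 0) = (\<lambda>x. fp x + hp x)"
     "(\<lambda>x. - min (f x + h x) 0) = (\<lambda>x. fn x + hn x)"
     "(\<lambda>x. max (g x + h x) 0) = (\<lambda>x. gp x + hp x)"
     "(\<lambda>x. - min (g x + h x) 0) = (\<lambda>x. gn x + hn x)"
    by (simp_all only: fun_eq_iff P simp_thms)
  have Q: "quant M (\<lambda>x. f x + g x + h x) u y = quant_pos M (\<lambda>x. fp x + gp x + hp x) u y - quant_pos M (\<lambda>x. fn x + gn x + hn x) u y"
     "quant M (\<lambda>x. f x + g x) u y = quant_pos M (\<lambda>x. fp x + gp x) u y - quant_pos M (\<lambda>x. fn x + gn x) u y"
     "quant M (\<lambda>x. f x + h x) u y = quant_pos M (\<lambda>x. fp x + hp x) u y - quant_pos M (\<lambda>x. fn x + hn x) u y"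
     "quant M (\<lambda>x. g x + h x) u y = quant_pos M (\<lambda>x. gp x + hp x) u y - quant_pos M (\<lambda>x. gn x + hn x) u y"
     "quant M f u y = quant_pos M fp u y - quant_pos M fn u y"
     "quant M g u y = quant_pos M gp u y - quant_pos M gn u y"
     "quant M h u y = quant_pos M hp u y - quant_pos M hn u y" for u y
    unfolding quant_def E3 by (simp_all add: fp_def gp_def hp_def fn_def gn_def hn_def)
  show ?thesis
    unfolding op_eq_def
  proof (intro ballI AE_I2)
    fix u y assume u: "u \<in> L2 M"
    show "quant M (\<lambda>x. f x + g x + h x) u y = quant M (\<lambda>x. f x + g x) u y + quant M (\<lambda>x. f x + h x) u y
                    + quant M (\<lambda>x. g x + h x) u y
                    - quant M f u y - quant M g u y - quant M h u y"
      unfolding Q d_pos[OF pm(1,3,5,2,4,6) nn(1-3) Dp u, of y] d_pos[OF pm(7,9,11,8,10,12) nn(4-6) Dn u, of y]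
      by algebra
  qed
qed



lemma min_lip: "\<bar>min (a::real) b - min a' b'\<bar> \<le> \<bar>a - a'\<bar> + \<bar>b - b'\<bar>"
  by (auto simp: min_def)

context prob_space begin

lemma L2_facts:
  assumes "g \<in> L2 M"
  shows "g \<in> borel_measurable M" "integrable M (\<lambda>x. (cmod (g x))\<^sup>2)"
    "integrable M (\<lambda>x. cmod (g x))"
proof -
  show gm: "g \<in> borel_measurable M" and gi: "integrable M (\<lambda>x. (cmod (g x))\<^sup>2)"
    using assms by (auto simp: L2_def)
  have w: "integrable M (\<lambda>x. 1 + (cmod (g x))\<^sup>2)" using gi by simp
  show "integrable M (\<lambda>x. cmod (g x))"
  proof (rule Bochner_Integration.integrable_bound[OF w])
    show "(\<lambda>x. cmod (g x)) \<in> borel_measurable M" using gm by measurable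
    show "AE x in M. norm (cmod (g x)) \<le> norm (1 + (cmod (g x))\<^sup>2)"
    proof (intro AE_I2)
      fix x
      have "cmod (g x) \<le> 1 + (cmod (g x))\<^sup>2"
        using sum_squares_bound[of 1 "cmod (g x)"] norm_ge_zero[of "g x"] by (simp only: mult_1_right power_one)
      then show "norm (cmod (g x)) \<le> norm (1 + (cmod (g x))\<^sup>2)" by simp
    qed
  qed
qed

lemma prod_int:
  fixes e :: "'a \<Rightarrow> real"
  assumes "e \<in> borel_measurable M" "integrable M (\<lambda>x. (e x)\<^sup>2)" "g \<in> L2 M"
  shows "integrable M (\<lambda>x. e x * cmod (g x))"
proof -
  have gm: "g \<in> borel_measurable M" and gi: "integrable M (\<lambda>x. (cmod (g x))\<^sup>2)"
    using L2_facts[OF assms(3)] by auto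
  have w: "integrable M (\<lambda>x. (e x)\<^sup>2 + (cmod (g x))\<^sup>2)" using gi assms(2) by simp
  show ?thesis
  proof (rule Bochner_Integration.integrable_bound[OF w])
    show "(\<lambda>x. e x * cmod (g x)) \<in> borel_measurable M" using gm assms(1) by measurable
    show "AE x in M. norm (e x * cmod (g x)) \<le> norm ((e x)\<^sup>2 + (cmod (g x))\<^sup>2)"
    proof (intro AE_I2)
      fix x
      have "\<bar>e x\<bar> * cmod (g x) \<le> (e x)\<^sup>2 + (cmod (g x))\<^sup>2"
      proof -
        have "2 * (\<bar>e x\<bar> * cmod (g x)) \<le> (e x)\<^sup>2 + (cmod (g x))\<^sup>2"
          using sum_squares_bound[of "\<bar>e x\<bar>" "cmod (g x)"] by (simp add: mult.assoc)
        then show ?thesis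
          using mult_nonneg_nonneg[OF abs_ge_zero[of "e x"] norm_ge_zero[of "g x"]] by linarith
      qed
      then show "norm (e x * cmod (g x)) \<le> norm ((e x)\<^sup>2 + (cmod (g x))\<^sup>2)"
        by (simp add: abs_mult)
    qed
  qed
qed

lemma K_bound:
  fixes k f :: "'a \<Rightarrow> real"
  assumes km: "k \<in> borel_measurable M" and ki: "integrable M (\<lambda>x. (k x)\<^sup>2)" and kn: "\<And>x. 0 \<le> k x"
    and fm: "f \<in> borel_measurable M" and fi: "integrable M (\<lambda>x. (f x)\<^sup>2)" and kf: "\<And>x. k x \<le> f x"
    and g: "g \<in> L2 M" and G: "(LINT x|M. (cmod (g x))\<^sup>2) \<le> 1"
    and b: "0 < b" and A: "(LINT x|M. (f x - k x)\<^sup>2) \<le> b\<^sup>2"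
  shows "l2norm M (\<lambda>y. quant_pos M k g y - quant_pos M f g y) \<le> 2 * b"
proof -
  define e where "e = (\<lambda>x. f x - k x)"
  have fn: "\<And>x. 0 \<le> f x" using kn kf order_trans by blast
  have en: "\<And>x. 0 \<le> e x" using kf by (simp add: e_def)
  have em: "e \<in> borel_measurable M" using km fm by (simp add: e_def)
  have ei: "integrable M (\<lambda>x. (e x)\<^sup>2)"
  proof (rule sq_int_bound[OF em fi])
    fix x show "\<bar>e x\<bar> \<le> \<bar>f x\<bar>" using kn[of x] kf[of x] by (simp add: e_def)
  qed
  have gm: "g \<in> borel_measurable M" and gi: "integrable M (\<lambda>x. (cmod (g x))\<^sup>2)"
    and g1: "integrable M (\<lambda>x. cmod (g x))" using L2_facts[OF g] by auto
  have egi: "integrable M (\<lambda>x. e x * cmod (g x))" by (rule prod_int[OF em ei g])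
  define c where "c = (LINT x|M. e x * cmod (g x))"
  define s where "s = (LINT x|M. cmod (g x))"
  have step1: "cmod (quant_pos M k g y - quant_pos M f g y) \<le> c + e y * s" for y
  proof -
    have I1: "integrable M (\<lambda>x. complex_of_real (min (k x) (k y)) * g x)"
      by (rule kint[OF km ki kn g kn])
    have I2: "integrable M (\<lambda>x. complex_of_real (min (f x) (f y)) * g x)"
      by (rule kint[OF fm fi fn g fn])
    have "quant_pos M k g y - quant_pos M f g y =
        (LINT x|M. complex_of_real (min (k x) (k y)) * g x - complex_of_real (min (f x) (f y)) * g x)"
      unfolding quant_pos_def using I1 I2 by simp
    also have "cmod \<dots> \<le> (LINT x|M. cmod (complex_of_real (min (k x) (k y)) * g x - complex_of_real (min (f x) (f y)) * g x))"
      by (rule integral_norm_bound)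
    also have "\<dots> \<le> (LINT x|M. e x * cmod (g x) + e y * cmod (g x))"
    proof (rule integral_mono_AE')
      show "integrable M (\<lambda>x. e x * cmod (g x) + e y * cmod (g x))" using egi g1 by simp
      show "AE x in M. 0 \<le> e x * cmod (g x) + e y * cmod (g x)"
        using en by (intro AE_I2) simp
      show "AE x in M. cmod (complex_of_real (min (k x) (k y)) * g x - complex_of_real (min (f x) (f y)) * g x)
          \<le> e x * cmod (g x) + e y * cmod (g x)"
      proof (intro AE_I2)
        fix x
        have "complex_of_real (min (k x) (k y)) * g x - complex_of_real (min (f x) (f y)) * g x
            = complex_of_real (min (k x) (k y) - min (f x) (f y)) * g x"
          by (simp only: of_real_diff left_diff_distrib)
        then have "cmod (complex_of_real (min (k x) (k y)) * g x - complex_of_real (min (f x) (f y)) * g x)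
            = \<bar>min (k x) (k y) - min (f x) (f y)\<bar> * cmod (g x)" by (simp only: norm_mult norm_of_real)
        also have "\<dots> \<le> (e x + e y) * cmod (g x)"
          using min_lip[of "k x" "k y" "f x" "f y"] kf[of x] kf[of y]
          by (intro mult_right_mono) (auto simp: e_def)
        finally show "cmod (complex_of_real (min (k x) (k y)) * g x - complex_of_real (min (f x) (f y)) * g x)
          \<le> e x * cmod (g x) + e y * cmod (g x)" by (simp add: distrib_right)
      qed
    qed
    also have "\<dots> = c + e y * s" using egi g1 by (simp add: c_def s_def)
    finally show ?thesis .
  qed
  have s1: "s \<le> 1"
  proof -
    have "s \<le> (LINT x|M. 1/2 + (cmod (g x))\<^sup>2 / 2)"
      unfolding s_def
    proof (rule integral_mono)
      show "integrable M (\<lambda>x. 1/2 + (cmod (g x))\<^sup>2 / 2)" using gi by simp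
      show "integrable M (\<lambda>x. cmod (g x))" by (rule g1)
      fix x
      show "cmod (g x) \<le> 1/2 + (cmod (g x))\<^sup>2 / 2"
        using sum_squares_bound[of 1 "cmod (g x)"] by simp
    qed
    also have "\<dots> = 1/2 + (LINT x|M. (cmod (g x))\<^sup>2) / 2"
      using gi by (simp add: prob_space)
    also have "\<dots> \<le> 1" using G by simp
    finally show ?thesis .
  qed
  have c1: "c \<le> b"
  proof -
    have "b * c = (LINT x|M. b * (e x * cmod (g x)))" by (simp add: c_def)
    also have "\<dots> \<le> (LINT x|M. (e x)\<^sup>2 / 2 + b\<^sup>2 * (cmod (g x))\<^sup>2 / 2)"
    proof (rule integral_mono)
      show "integrable M (\<lambda>x. b * (e x * cmod (g x)))" using egi by simp
      show "integrable M (\<lambda>x. (e x)\<^sup>2 / 2 + b\<^sup>2 * (cmod (g x))\<^sup>2 / 2)" using ei gi by simp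
      fix x
      have "2 * (e x) * (b * cmod (g x)) \<le> (e x)\<^sup>2 + (b * cmod (g x))\<^sup>2"
        by (rule sum_squares_bound)
      then show "b * (e x * cmod (g x)) \<le> (e x)\<^sup>2 / 2 + b\<^sup>2 * (cmod (g x))\<^sup>2 / 2"
        by (simp add: power_mult_distrib algebra_simps)
    qed
    also have "\<dots> = (LINT x|M. (e x)\<^sup>2) / 2 + b\<^sup>2 * (LINT x|M. (cmod (g x))\<^sup>2) / 2"
      using ei gi by simp
    also have "\<dots> \<le> b\<^sup>2 / 2 + b\<^sup>2 * 1 / 2"
      using A G b unfolding e_def by (intro add_mono divide_right_mono mult_left_mono) auto
    also have "\<dots> = b * b" by (simp add: power2_eq_square)
    finally show ?thesis using b by simp
  qed
  have step2: "(cmod (quant_pos M k g y - quant_pos M f g y))\<^sup>2 \<le> 2 * b\<^sup>2 + 2 * (e y)\<^sup>2" for y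
  proof -
    have "cmod (quant_pos M k g y - quant_pos M f g y) \<le> b + e y"
      using step1[of y] c1 s1 en[of y] mult_left_mono[OF s1 en[of y]] by simp
    then have "(cmod (quant_pos M k g y - quant_pos M f g y))\<^sup>2 \<le> (b + e y)\<^sup>2"
      by (intro power_mono) auto
    also have "\<dots> \<le> 2 * b\<^sup>2 + 2 * (e y)\<^sup>2"
      using sum_squares_bound[of b "e y"] by (simp add: power2_sum)
    finally show ?thesis .
  qed
  have "(LINT y|M. (cmod (quant_pos M k g y - quant_pos M f g y))\<^sup>2) \<le> (LINT y|M. 2 * b\<^sup>2 + 2 * (e y)\<^sup>2)"
    by (rule integral_mono_AE') (use ei step2 in auto)
  also have "\<dots> = 2 * b\<^sup>2 + 2 * (LINT y|M. (e y)\<^sup>2)" using ei by (simp add: prob_space)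
  also have "\<dots> \<le> (2 * b)\<^sup>2" using A unfolding e_def by (simp add: power_mult_distrib)
  finally have "l2norm M (\<lambda>y. quant_pos M k g y - quant_pos M f g y) \<le> sqrt ((2 * b)\<^sup>2)"
    unfolding l2norm_def by (rule real_sqrt_le_mono)
  moreover have "sqrt ((2 * b)\<^sup>2) = 2 * b" using b by (simp only: real_sqrt_abs)
  ultimately show ?thesis by simp
qed

lemma quant_nonneg:
  assumes "\<And>x. 0 \<le> k x"
  shows "quant N k = quant_pos N k"
proof -
  have e1: "(\<lambda>x. max (k x) 0) = k" using assms by (auto simp: max_def fun_eq_iff intro: order.antisym)
  have e2: "(\<lambda>x. - min (k x) 0) = (\<lambda>x. 0)" using assms by (auto simp: min_def fun_eq_iff intro: order.antisym)
  show ?thesis unfolding quant_def[abs_def] e1 e2 by (simp add: quant_pos_def[abs_def])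
qed

lemma part_c:
  assumes fsr: "\<forall>i. rand_var M (fs i)" and fr: "rand_var M f" and f0: "\<forall>x. 0 \<le> fs 0 x"
    and inc: "\<forall>i x. fs i x \<le> fs (Suc i) x" and lim: "\<forall>x. (\<lambda>i. fs i x) \<longlonglongrightarrow> f x"
  shows "(\<lambda>i. op_norm M (\<lambda>g y. quant M (fs i) g y - quant M f g y)) \<longlonglongrightarrow> 0"
proof -
  have nn: "0 \<le> fs i x" for i x
  proof (induction i)
    case 0 then show ?case using f0 by simp
  next
    case (Suc i) then show ?case using inc[rule_format, of i x] by linarith
  qed
  have le: "fs i x \<le> f x" for i x
    by (rule incseq_le[OF _ lim[rule_format]]) (rule incseq_SucI, use inc in auto)
  have fnn: "0 \<le> f x" for x using nn[of 0 x] le[of 0 x] by linarith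
  have fm: "f \<in> borel_measurable M" and fi: "integrable M (\<lambda>x. (f x)\<^sup>2)"
    using fr by (auto simp: rand_var_def)
  have fsm: "fs i \<in> borel_measurable M" and fsi: "integrable M (\<lambda>x. (fs i x)\<^sup>2)" for i
    using fsr by (auto simp: rand_var_def)
  define A where "A i = (LINT x|M. (f x - fs i x)\<^sup>2)" for i
  have A0: "A \<longlonglongrightarrow> 0"
  proof -
    have "(\<lambda>i. LINT x|M. (f x - fs i x)\<^sup>2) \<longlonglongrightarrow> (LINT x|M. (0::real))"
    proof (rule integral_dominated_convergence[where w="\<lambda>x. (f x)\<^sup>2"])
      show "(\<lambda>x. 0::real) \<in> borel_measurable M" by simp
      show "(\<lambda>x. (f x - fs i x)\<^sup>2) \<in> borel_measurable M" for i using fm fsm by measurable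
      show "integrable M (\<lambda>x. (f x)\<^sup>2)" by (rule fi)
      show "AE x in M. (\<lambda>i. (f x - fs i x)\<^sup>2) \<longlonglongrightarrow> 0"
      proof (intro AE_I2)
        fix x
        have "(\<lambda>i. (f x - fs i x)\<^sup>2) \<longlonglongrightarrow> (f x - f x)\<^sup>2"
          by (intro tendsto_intros lim[rule_format])
        then show "(\<lambda>i. (f x - fs i x)\<^sup>2) \<longlonglongrightarrow> 0" by simp
      qed
      show "AE x in M. norm ((f x - fs i x)\<^sup>2) \<le> (f x)\<^sup>2" for i
      proof (intro AE_I2)
        fix x
        have "0 \<le> f x - fs i x" "f x - fs i x \<le> f x" using le[of i x] nn[of i x] by auto
        then show "norm ((f x - fs i x)\<^sup>2) \<le> (f x)\<^sup>2" by (simp add: power_mono)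
      qed
    qed
    then show ?thesis by (simp add: A_def[abs_def])
  qed
  have Ann: "0 \<le> A i" for i unfolding A_def by (rule integral_nonneg_AE) simp
  define b where "b i = sqrt (A i) + inverse (real (Suc i))" for i
  have bpos: "0 < b i" for i unfolding b_def using Ann[of i] by (simp add: add_nonneg_pos)
  have Ab: "A i \<le> (b i)\<^sup>2" for i
  proof -
    have "A i = (sqrt (A i))\<^sup>2" using Ann[of i] by simp
    also have "\<dots> \<le> (b i)\<^sup>2" unfolding b_def using Ann[of i] by (intro power_mono) auto
    finally show ?thesis .
  qed
  have b0: "b \<longlonglongrightarrow> 0"
  proof -
    have "(\<lambda>i. sqrt (A i) + inverse (real (Suc i))) \<longlonglongrightarrow> sqrt 0 + 0"
      by (intro tendsto_intros A0 LIMSEQ_inverse_real_of_nat)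
    then show ?thesis by (simp add: b_def[abs_def])
  qed
  have bound: "op_norm M (\<lambda>g y. quant M (fs i) g y - quant M f g y) \<le> ennreal (2 * b i)" for i
  proof -
    have q1: "quant M (fs i) = quant_pos M (fs i)" by (rule quant_nonneg) (rule nn)
    have q2: "quant M f = quant_pos M f" by (rule quant_nonneg) (rule fnn)
    show ?thesis
      unfolding op_norm_def q1 q2
    proof (rule SUP_least)
      fix g assume g: "g \<in> {g \<in> L2 M. l2norm M g \<le> 1}"
      have G: "(LINT x|M. (cmod (g x))\<^sup>2) \<le> 1" using g by (simp add: l2norm_def)
      have "l2norm M (\<lambda>y. quant_pos M (fs i) g y - quant_pos M f g y) \<le> 2 * b i"
        by (rule K_bound[OF fsm fsi nn fm fi le _ G bpos]) (use g Ab[of i] in \<open>auto simp: A_def\<close>)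
      then show "ennreal (l2norm M (\<lambda>y. quant_pos M (fs i) g y - quant_pos M f g y)) \<le> ennreal (2 * b i)"
        by (rule ennreal_leI)
    qed
  qed
  show ?thesis
  proof (rule tendsto_sandwich[where f="\<lambda>i. 0" and h="\<lambda>i. ennreal (2 * b i)"])
    show "\<forall>\<^sub>F n in sequentially. 0 \<le> op_norm M (\<lambda>g y. quant M (fs n) g y - quant M f g y)" by simp
    show "\<forall>\<^sub>F n in sequentially. op_norm M (\<lambda>g y. quant M (fs n) g y - quant M f g y) \<le> ennreal (2 * b n)"
      using bound by simp
    show "(\<lambda>i. 0::ennreal) \<longlonglongrightarrow> 0" by simp
    have "(\<lambda>i. ennreal (2 * b i)) \<longlonglongrightarrow> ennreal (2 * 0)"
      by (intro tendsto_ennrealI tendsto_intros b0)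
    then show "(\<lambda>i. ennreal (2 * b i)) \<longlonglongrightarrow> 0" by simp
  qed
qed

end

theorem theorem3p1:
  fixes M :: "'a measure"
  assumes "prob_space M"
  shows
   "(\<forall>A\<in>sets M. op_eq M (quant M (indicator A)) (mu_op M A))
    \<and> (\<forall>f (\<alpha>::real). rand_var M f \<longrightarrow>
         op_eq M (quant M (\<lambda>x. \<alpha> * f x)) (\<lambda>g y. complex_of_real \<alpha> * quant M f g y))
    \<and> (\<forall>(fs :: nat \<Rightarrow> 'a \<Rightarrow> real) f.
         (\<forall>i. rand_var M (fs i)) \<and> rand_var M f \<and> (\<forall>x. 0 \<le> fs 0 x)
         \<and> (\<forall>i x. fs i x \<le> fs (Suc i) x) \<and> (\<forall>x. (\<lambda>i. fs i x) \<longlonglongrightarrow> f x)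
         \<longrightarrow> (\<lambda>i. op_norm M (\<lambda>g y. quant M (fs i) g y - quant M f g y)) \<longlonglongrightarrow> 0)
    \<and> (\<forall>f g h. rand_var M f \<and> rand_var M g \<and> rand_var M h
         \<and> (\<forall>x. f x \<noteq> 0 \<longrightarrow> g x = 0 \<and> h x = 0) \<and> (\<forall>x. g x \<noteq> 0 \<longrightarrow> h x = 0)
         \<longrightarrow> op_eq M (quant M (\<lambda>x. f x + g x + h x))
               (\<lambda>u y. quant M (\<lambda>x. f x + g x) u y + quant M (\<lambda>x. f x + h x) u y
                    + quant M (\<lambda>x. g x + h x) u y
                    - quant M f u y - quant M g u y - quant M h u y))"
  proof -
  interpret prob_space M by (rule assms)
  show ?thesis
  proof (intro conjI)
    show "\<forall>A\<in>sets M. op_eq M (quant M (indicator A)) (mu_op M A)" using part_a by blast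
    show "\<forall>f (\<alpha>::real). rand_var M f \<longrightarrow>
         op_eq M (quant M (\<lambda>x. \<alpha> * f x)) (\<lambda>g y. complex_of_real \<alpha> * quant M f g y)"
      using part_b by blast
    show "\<forall>(fs :: nat \<Rightarrow> 'a \<Rightarrow> real) f.
         (\<forall>i. rand_var M (fs i)) \<and> rand_var M f \<and> (\<forall>x. 0 \<le> fs 0 x)
         \<and> (\<forall>i x. fs i x \<le> fs (Suc i) x) \<and> (\<forall>x. (\<lambda>i. fs i x) \<longlonglongrightarrow> f x)
         \<longrightarrow> (\<lambda>i. op_norm M (\<lambda>g y. quant M (fs i) g y - quant M f g y)) \<longlonglongrightarrow> 0"
      using part_c by blast
    show "\<forall>f g h. rand_var M f \<and> rand_var M g \<and> rand_var M h
         \<and> (\<forall>x. f x \<noteq> 0 \<longrightarrow> g x = 0 \<and> h x = 0) \<and> (\<forall>x. g x \<noteq> 0 \<longrightarrow> h x = 0)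
         \<longrightarrow> op_eq M (quant M (\<lambda>x. f x + g x + h x))
               (\<lambda>u y. quant M (\<lambda>x. f x + g x) u y + quant M (\<lambda>x. f x + h x) u y
                    + quant M (\<lambda>x. g x + h x) u y
                    - quant M f u y - quant M g u y - quant M h u y)"
      using part_d by blast
  qed
qed

end
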